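(* Let $S$ be the group defined in the context, and define the subgroups $$2_A=\langle (v_1v_3)^2,(v_1v_2)^2,s^2,ts\rangle,\qquad 2_C=\langle (v_1v_3)^2,(v_1v_2)^2,s^2,v_1v_3ts\rangle.$$ Both are isomorphic to $(\mathbb{Z}/2)^4$. Then there is an outer (i.e. non-inner) automorphism $\alpha:S\to S$ that exchanges $2_A$ and $2_C$.
   Context: Let $S$ be the group generated by $v_1,v_2,v_3,s,t$, where $v_1,v_2,v_3$ commute, each has order $4$, and together generate $(\mathbb{Z}/4)^3$. The elements $s,t$ generate $D_8=\langle t,s\mid t^2=s^4=(ts)^2=1\rangle$, which acts on $(\mathbb{Z}/4)^3$ by conjugation. Writing $x^y=yxy^{-1}$, the action is $$v_1^t=v_3^{-1},\quad v_2^t=v_2^{-1},\quad v_1^s=v_2,\quad v_2^s=v_3,\quad v_3^s=v_2^{-1}v_1v_3.$$ So $S=(\mathbb{Z}/4)^3\rtimes D_8$. *)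

theory Defs
  imports "HOL-Algebra.Algebra"
begin

text \<open>Concrete model of S = (Z/4)^3 \<rtimes> D_8.
  An element of (Z/4)^3 is a triple (x,y,z) of integers in {0..3}, standing for
  v1^x v2^y v3^z (written additively).  An element of D_8 is a pair (k,e) with
  k in {0..3}, e in {0,1}, standing for s^k t^e.  An element of S is a pair (v,g),
  standing for the product v g.\<close>

type_synonym vec4 = "int \<times> int \<times> int"
type_synonym d8 = "int \<times> int"

definition vmod :: "vec4 \<Rightarrow> vec4" where
  "vmod v = (case v of (x,y,z) \<Rightarrow> (x mod 4, y mod 4, z mod 4))"

definition vadd :: "vec4 \<Rightarrow> vec4 \<Rightarrow> vec4" where
  "vadd v w = (case v of (x,y,z) \<Rightarrow> case w of (x',y',z') \<Rightarrow> vmod (x+x', y+y', z+z'))"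

text \<open>Action of s: v1 \<mapsto> v2, v2 \<mapsto> v3, v3 \<mapsto> v2^{-1} v1 v3 (additively e3 \<mapsto> e1 - e2 + e3).\<close>
definition act_s :: "vec4 \<Rightarrow> vec4" where
  "act_s v = (case v of (x,y,z) \<Rightarrow> vmod (z, x - z, y + z))"

definition act_t :: "vec4 \<Rightarrow> vec4" where
  "act_t v = (case v of (x,y,z) \<Rightarrow> vmod (-z, -y, -x))"

text \<open>Action of s^k t^e by conjugation: g v g^{-1}.\<close>
definition d8_act :: "d8 \<Rightarrow> vec4 \<Rightarrow> vec4" where
  "d8_act g v = (case g of (k,e) \<Rightarrow> (act_s ^^ nat k) ((act_t ^^ nat e) v))"

text \<open>Multiplication in D_8 = <t,s | t^2 = s^4 = (ts)^2 = 1>, using t s^b = s^{-b} t.\<close>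
definition d8_mult :: "d8 \<Rightarrow> d8 \<Rightarrow> d8" where
  "d8_mult g h = (case g of (a,e) \<Rightarrow> case h of (b,f) \<Rightarrow>
      ((a + (if e = 0 then b else - b)) mod 4, (e + f) mod 2))"

definition S_grp :: "(vec4 \<times> d8) monoid" where
  "S_grp = \<lparr> carrier = ({0..3} \<times> {0..3} \<times> {0..3}) \<times> ({0..3} \<times> {0..1}),
             monoid.mult = (\<lambda>(v,g) (w,h). (vadd v (d8_act g w), d8_mult g h)),
             one = ((0,0,0),(0,0)) \<rparr>"

definition v1 :: "vec4 \<times> d8" where "v1 = ((1,0,0),(0,0))"
definition v2 :: "vec4 \<times> d8" where "v2 = ((0,1,0),(0,0))"
definition v3 :: "vec4 \<times> d8" where "v3 = ((0,0,1),(0,0))"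
definition s_el :: "vec4 \<times> d8" where "s_el = ((0,0,0),(1,0))"
definition t_el :: "vec4 \<times> d8" where "t_el = ((0,0,0),(0,1))"

definition two_A :: "(vec4 \<times> d8) set" where
  "two_A = generate S_grp
     { (v1 \<otimes>\<^bsub>S_grp\<^esub> v3) [^]\<^bsub>S_grp\<^esub> (2::nat),
       (v1 \<otimes>\<^bsub>S_grp\<^esub> v2) [^]\<^bsub>S_grp\<^esub> (2::nat),
       s_el [^]\<^bsub>S_grp\<^esub> (2::nat),
       t_el \<otimes>\<^bsub>S_grp\<^esub> s_el }"

definition two_C :: "(vec4 \<times> d8) set" where
  "two_C = generate S_grp
     { (v1 \<otimes>\<^bsub>S_grp\<^esub> v3) [^]\<^bsub>S_grp\<^esub> (2::nat),
       (v1 \<otimes>\<^bsub>S_grp\<^esub> v2) [^]\<^bsub>S_grp\<^esub> (2::nat),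
       s_el [^]\<^bsub>S_grp\<^esub> (2::nat),
       v1 \<otimes>\<^bsub>S_grp\<^esub> v3 \<otimes>\<^bsub>S_grp\<^esub> t_el \<otimes>\<^bsub>S_grp\<^esub> s_el }"

definition Z2_4 :: "(int \<times> int \<times> int \<times> int) monoid" where
  "Z2_4 = DirProd (integer_mod_group 2) (DirProd (integer_mod_group 2)
            (DirProd (integer_mod_group 2) (integer_mod_group 2)))"

end

theory Submission imports Defs "HOL-Library.Numeral_Type" begin

lemma m4: "((a::int) mod 4 = b mod 4) \<longleftrightarrow> ((of_int a :: 4) = of_int b)"
  by (simp add: bit0.of_int_eq Abs_bit0_inject)
lemma m4b: "(of_int (a mod 4) :: 4) = of_int a"
  by (simp add: bit0.of_int_eq)
lemma four0: "(4::4) = 0" by simp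

lemma m40: "((a::int) mod 4 = 0) \<longleftrightarrow> ((of_int a :: 4) = 0)"
  using m4[of a 0] by simp
lemma mod4_le[simp]: "(a::int) mod 4 \<le> 3" using pos_mod_bound[of 4 a] by arith
lemma mod2_le[simp]: "(a::int) mod 2 \<le> 1" using pos_mod_bound[of 2 a] by arith

lemmas m4s = m40 m4 m4b four0 of_int_add of_int_diff of_int_mult of_int_minus

lemma vmod_idem[simp]: "vmod (vmod v) = vmod v"
  by (cases v) (simp add: vmod_def)

lemma vadd_comm: "vadd v w = vadd w v"
  by (cases v; cases w) (simp add: vadd_def add.commute)

lemma vadd_assoc: "vadd (vadd u v) w = vadd u (vadd v w)"
  by (cases u; cases v; cases w) (simp add: vadd_def vmod_def m4s algebra_simps)

lemma vadd_vmod1[simp]: "vadd (vmod u) v = vadd u v"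
  by (cases u; cases v) (simp add: vadd_def vmod_def m4s algebra_simps)
lemma vadd_vmod2[simp]: "vadd u (vmod v) = vadd u v"
  by (cases u; cases v) (simp add: vadd_def vmod_def m4s algebra_simps)
lemma vmod_vadd[simp]: "vmod (vadd u v) = vadd u v"
  by (cases u; cases v) (simp add: vadd_def)

definition ls :: "vec4 \<Rightarrow> vec4" where "ls v = (case v of (x,y,z) \<Rightarrow> (z, x - z, y + z))"
definition lt :: "vec4 \<Rightarrow> vec4" where "lt v = (case v of (x,y,z) \<Rightarrow> (-z, -y, -x))"

lemma act_s_ls: "act_s v = vmod (ls v)" by (cases v) (simp add: act_s_def ls_def)
lemma act_t_lt: "act_t v = vmod (lt v)" by (cases v) (simp add: act_t_def lt_def)

lemma act_s_vmod[simp]: "act_s (vmod v) = act_s v"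
  by (cases v) (simp add: vmod_def act_s_def m4s algebra_simps)
lemma act_t_vmod[simp]: "act_t (vmod v) = act_t v"
  by (cases v) (simp add: vmod_def act_t_def m4s algebra_simps)
lemma vmod_ls_vmod: "vmod (ls (vmod v)) = vmod (ls v)"
  using act_s_vmod act_s_ls by metis
lemma vmod_lt_vmod: "vmod (lt (vmod v)) = vmod (lt v)"
  using act_t_vmod act_t_lt by metis

lemma act_s_add: "act_s (vadd v w) = vadd (act_s v) (act_s w)"
  by (cases v; cases w) (simp add: vadd_def act_s_def vmod_def m4s algebra_simps)
lemma act_t_add: "act_t (vadd v w) = vadd (act_t v) (act_t w)"
  by (cases v; cases w) (simp add: vadd_def act_t_def vmod_def m4s algebra_simps)

lemma funpow_s_add: "(act_s ^^ n) (vadd v w) = vadd ((act_s ^^ n) v) ((act_s ^^ n) w)"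
  by (induction n) (auto simp: act_s_add)
lemma funpow_t_add: "(act_t ^^ n) (vadd v w) = vadd ((act_t ^^ n) v) ((act_t ^^ n) w)"
  by (induction n) (auto simp: act_t_add)

lemma d8_act_add: "d8_act g (vadd v w) = vadd (d8_act g v) (d8_act g w)"
  by (cases g) (simp add: d8_act_def funpow_s_add funpow_t_add)

lemma funpow_s_vmod: "(act_s ^^ n) (vmod v) = vmod ((ls ^^ n) v)"
proof (induction n)
  case 0 then show ?case by simp
next
  case (Suc n)
  have "(act_s^^Suc n) (vmod v) = act_s ((act_s^^n) (vmod v))" by simp
  also have "\<dots> = act_s (vmod ((ls^^n) v))" using Suc.IH by simp
  also have "\<dots> = act_s ((ls^^n) v)" by (rule act_s_vmod)
  also have "\<dots> = vmod (ls ((ls^^n) v))" by (rule act_s_ls)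
  finally show ?case by simp
qed
lemma funpow_t_vmod: "(act_t ^^ n) (vmod v) = vmod ((lt ^^ n) v)"
proof (induction n)
  case 0 then show ?case by simp
next
  case (Suc n)
  have "(act_t^^Suc n) (vmod v) = act_t ((act_t^^n) (vmod v))" by simp
  also have "\<dots> = act_t (vmod ((lt^^n) v))" using Suc.IH by simp
  also have "\<dots> = act_t ((lt^^n) v)" by (rule act_t_vmod)
  also have "\<dots> = vmod (lt ((lt^^n) v))" by (rule act_t_lt)
  finally show ?case by simp
qed

definition Lg :: "d8 \<Rightarrow> vec4 \<Rightarrow> vec4" where
  "Lg g v = (case g of (k,e) \<Rightarrow> (ls ^^ nat k) ((lt ^^ nat e) v))"

lemma d8_act_vmod: "d8_act g (vmod v) = vmod (Lg g v)"
  by (cases g) (simp add: d8_act_def Lg_def funpow_t_vmod funpow_s_vmod)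

definition d8c :: "d8 set" where "d8c = {0..3} \<times> {0..1}"

lemma int4: "(0::int) \<le> k \<Longrightarrow> k \<le> 3 \<Longrightarrow> k = 0 \<or> k = 1 \<or> k = 2 \<or> k = 3" by arith
lemma int2: "(0::int) \<le> k \<Longrightarrow> k \<le> 1 \<Longrightarrow> k = 0 \<or> k = 1" by arith

lemma d8c_cases: "g \<in> d8c \<Longrightarrow> g \<in> {(0,0),(1,0),(2,0),(3,0),(0,1),(1,1),(2,1),(3,1)}"
proof -
  assume "g \<in> d8c"
  then obtain k e where g: "g = (k,e)" and k: "0 \<le> k" "k \<le> 3" and e: "0 \<le> e" "e \<le> 1"
    by (cases g) (auto simp: d8c_def)
  show ?thesis using int4[OF k] int2[OF e] g by fastforce
qed

lemma Lg_comp: assumes "g \<in> d8c" "h \<in> d8c"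
  shows "vmod (Lg (d8_mult g h) u) = vmod (Lg g (Lg h u))"
proof -
  obtain x y z where u: "u = (x,y,z)" by (cases u)
  show ?thesis
  using d8c_cases[OF assms(1)] d8c_cases[OF assms(2)]
  by (auto simp: d8_mult_def Lg_def u numeral_eq_Suc ls_def lt_def vmod_def m4s algebra_simps)
qed

lemma d8_act_comp: assumes "g \<in> d8c" "h \<in> d8c"
  shows "d8_act (d8_mult g h) (vmod u) = d8_act g (d8_act h (vmod u))"
  by (simp add: d8_act_vmod Lg_comp[OF assms] del: vmod_idem)


definition vc :: "vec4 set" where "vc = {0..3} \<times> {0..3} \<times> {0..3}"

lemma carrier_S: "carrier S_grp = vc \<times> d8c"
  by (simp add: S_grp_def vc_def d8c_def)

lemma mult_S: "x \<otimes>\<^bsub>S_grp\<^esub> y = (vadd (fst x) (d8_act (snd x) (fst y)), d8_mult (snd x) (snd y))"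
  by (cases x; cases y) (simp add: S_grp_def)

lemma one_S: "\<one>\<^bsub>S_grp\<^esub> = ((0,0,0),(0,0))"
  by (simp add: S_grp_def)

lemma vc_vmod: "v \<in> vc \<Longrightarrow> vmod v = v"
  by (cases v) (simp add: vc_def vmod_def)

lemma vmod_vc: "vmod v \<in> vc"
  by (cases v) (simp add: vc_def vmod_def)

lemma vadd_vc: "vadd v w \<in> vc"
  by (cases v; cases w) (simp add: vc_def vadd_def vmod_def)

lemma d8_mult_c: "d8_mult g h \<in> d8c"
  by (cases g; cases h) (simp add: d8c_def d8_mult_def)

lemma d8_act_vc: "w \<in> vc \<Longrightarrow> d8_act g w = vmod (Lg g w)"
  using d8_act_vmod[of g w] vc_vmod[of w] by simp

lemma d8_act_vc2: "w \<in> vc \<Longrightarrow> d8_act g w \<in> vc"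
  using d8_act_vc vmod_vc by simp

lemma d8_mult_assoc: "g \<in> d8c \<Longrightarrow> h \<in> d8c \<Longrightarrow> l \<in> d8c \<Longrightarrow>
  d8_mult (d8_mult g h) l = d8_mult g (d8_mult h l)"
  using d8c_cases[of g] d8c_cases[of h] d8c_cases[of l]
  by (auto simp: d8_mult_def)

definition d8inv :: "d8 \<Rightarrow> d8" where
  "d8inv g = (case g of (k,e) \<Rightarrow> (if e = 0 then (-k) mod 4 else k, e))"

lemma d8inv_c: "g \<in> d8c \<Longrightarrow> d8inv g \<in> d8c"
  using d8c_cases[of g] by (auto simp: d8inv_def d8c_def)

lemma d8inv_l: "g \<in> d8c \<Longrightarrow> d8_mult (d8inv g) g = (0,0)"
  using d8c_cases[of g] by (auto simp: d8inv_def d8_mult_def)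

definition vneg :: "vec4 \<Rightarrow> vec4" where "vneg v = (case v of (x,y,z) \<Rightarrow> vmod (-x,-y,-z))"

lemma vneg_l: "vadd (vneg v) v = (0,0,0)"
  by (cases v) (simp add: vneg_def vadd_def vmod_def m4s)

lemma vneg_vc: "vneg v \<in> vc"
  by (cases v) (simp add: vneg_def vmod_vc)

lemma d8_act_00: "d8_act (0,0) v = v" by (simp add: d8_act_def)

lemma group_S: "group S_grp"
proof (rule groupI)
  fix x y assume "x \<in> carrier S_grp" "y \<in> carrier S_grp"
  then show "x \<otimes>\<^bsub>S_grp\<^esub> y \<in> carrier S_grp"
    by (simp add: carrier_S mult_S vadd_vc d8_mult_c)
next
  show "\<one>\<^bsub>S_grp\<^esub> \<in> carrier S_grp" by (simp add: carrier_S one_S vc_def d8c_def)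
next
  fix x y z assume xyz: "x \<in> carrier S_grp" "y \<in> carrier S_grp" "z \<in> carrier S_grp"
  obtain v g where x: "x = (v,g)" by (cases x)
  obtain w h where y: "y = (w,h)" by (cases y)
  obtain u l where z: "z = (u,l)" by (cases z)
  have c: "v \<in> vc" "g \<in> d8c" "w \<in> vc" "h \<in> d8c" "u \<in> vc" "l \<in> d8c"
    using xyz x y z by (auto simp: carrier_S)
  have "d8_act (d8_mult g h) u = d8_act g (d8_act h u)"
    using d8_act_comp[OF c(2) c(4), of u] vc_vmod[OF c(5)] by simp
  then show "(x \<otimes>\<^bsub>S_grp\<^esub> y) \<otimes>\<^bsub>S_grp\<^esub> z = x \<otimes>\<^bsub>S_grp\<^esub> (y \<otimes>\<^bsub>S_grp\<^esub> z)"
    using d8_mult_assoc[OF c(2) c(4) c(6)]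
    by (simp add: x y z mult_S d8_act_add vadd_assoc)
next
  fix x assume "x \<in> carrier S_grp"
  then show "\<one>\<^bsub>S_grp\<^esub> \<otimes>\<^bsub>S_grp\<^esub> x = x"
    by (cases x) (auto simp: carrier_S one_S mult_S d8_act_00 d8_mult_def d8c_def vc_def vadd_def vmod_def)
next
  fix x assume x: "x \<in> carrier S_grp"
  obtain v g where xe: "x = (v,g)" by (cases x)
  have c: "v \<in> vc" "g \<in> d8c" using x xe by (auto simp: carrier_S)
  let ?y = "(vneg (d8_act (d8inv g) v), d8inv g)"
  have "?y \<in> carrier S_grp" using c d8inv_c by (simp add: carrier_S vneg_vc)
  moreover have "?y \<otimes>\<^bsub>S_grp\<^esub> x = \<one>\<^bsub>S_grp\<^esub>"
    by (simp add: xe mult_S one_S vneg_l d8inv_l c)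
  ultimately show "\<exists>y \<in> carrier S_grp. y \<otimes>\<^bsub>S_grp\<^esub> x = \<one>\<^bsub>S_grp\<^esub>" by blast
qed


lemma vadd_lcomm: "vadd u (vadd v w) = vadd v (vadd u w)"
  by (metis vadd_assoc vadd_comm)

definition cc :: "d8 \<Rightarrow> vec4" where "cc g = (if snd g = 1 then (1,0,1) else (0,0,0))"
definition cc' :: "d8 \<Rightarrow> vec4" where "cc' g = (if snd g = 1 then (3,0,3) else (0,0,0))"
definition alpha :: "vec4 \<times> d8 \<Rightarrow> vec4 \<times> d8" where "alpha x = (vadd (fst x) (cc (snd x)), snd x)"
definition alpha' :: "vec4 \<times> d8 \<Rightarrow> vec4 \<times> d8" where "alpha' x = (vadd (fst x) (cc' (snd x)), snd x)"

lemma cocycle: "g \<in> d8c \<Longrightarrow> h \<in> d8c \<Longrightarrow> cc (d8_mult g h) = vadd (cc g) (d8_act g (cc h))"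
  using d8c_cases[of g] d8c_cases[of h]
  by (auto simp: cc_def d8_mult_def d8_act_def numeral_eq_Suc act_s_def act_t_def vmod_def vadd_def)

lemma alpha_hom_eq: assumes "x \<in> carrier S_grp" "y \<in> carrier S_grp"
  shows "alpha (x \<otimes>\<^bsub>S_grp\<^esub> y) = alpha x \<otimes>\<^bsub>S_grp\<^esub> alpha y"
proof -
  obtain v g where x: "x = (v,g)" by (cases x)
  obtain w h where y: "y = (w,h)" by (cases y)
  have c: "g \<in> d8c" "h \<in> d8c" using assms x y by (auto simp: carrier_S)
  show ?thesis
    by (simp add: x y alpha_def mult_S cocycle[OF c] d8_act_add vadd_assoc vadd_lcomm vadd_comm)
qed

lemma alpha_carrier: "x \<in> carrier S_grp \<Longrightarrow> alpha x \<in> carrier S_grp"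
  by (cases x) (simp add: alpha_def carrier_S vadd_vc)
lemma alpha'_carrier: "x \<in> carrier S_grp \<Longrightarrow> alpha' x \<in> carrier S_grp"
  by (cases x) (simp add: alpha'_def carrier_S vadd_vc)
lemma vadd_0: "vadd v (0,0,0) = vmod v" by (cases v) (simp add: vadd_def vmod_def)
lemma cc_cc': "vadd (cc g) (cc' g) = (0,0,0)" by (simp add: cc_def cc'_def vadd_def vmod_def)
lemma cc'_cc: "vadd (cc' g) (cc g) = (0,0,0)" by (simp add: cc_def cc'_def vadd_def vmod_def)
lemma alpha'_alpha: "x \<in> carrier S_grp \<Longrightarrow> alpha' (alpha x) = x"
  by (cases x) (auto simp: alpha'_def alpha_def carrier_S vadd_assoc cc_cc' vadd_0 vc_vmod)
lemma alpha_alpha': "x \<in> carrier S_grp \<Longrightarrow> alpha (alpha' x) = x"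
  by (cases x) (auto simp: alpha'_def alpha_def carrier_S vadd_assoc cc'_cc vadd_0 vc_vmod)

lemma alpha_bij: "bij_betw alpha (carrier S_grp) (carrier S_grp)"
  by (rule bij_betw_byWitness[where f'=alpha'])
     (auto simp: alpha'_alpha alpha_alpha' alpha_carrier alpha'_carrier)

lemma alpha_iso: "alpha \<in> iso S_grp S_grp"
  by (auto simp: iso_def hom_def alpha_carrier alpha_hom_eq alpha_bij)


lemma d8_act_conc: "d8_act (0,0) w = w" "d8_act (1,0) w = act_s w" "d8_act (2,0) w = act_s (act_s w)"
  "d8_act (3,0) w = act_s (act_s (act_s w))" "d8_act (0,1) w = act_t w" "d8_act (1,1) w = act_s (act_t w)"
  "d8_act (2,1) w = act_s (act_s (act_t w))" "d8_act (3,1) w = act_s (act_s (act_s (act_t w)))"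
  by (simp_all add: d8_act_def numeral_eq_Suc)

lemma alpha_not_inner:
  "\<not> (\<exists>g \<in> carrier S_grp. \<forall>x \<in> carrier S_grp.
         alpha x = g \<otimes>\<^bsub>S_grp\<^esub> x \<otimes>\<^bsub>S_grp\<^esub> inv\<^bsub>S_grp\<^esub> g)"
proof
  interpret G: group S_grp by (rule group_S)
  assume "\<exists>g \<in> carrier S_grp. \<forall>x \<in> carrier S_grp.
         alpha x = g \<otimes>\<^bsub>S_grp\<^esub> x \<otimes>\<^bsub>S_grp\<^esub> inv\<^bsub>S_grp\<^esub> g"
  then obtain g0 where g0: "g0 \<in> carrier S_grp"
    and H: "\<And>x. x \<in> carrier S_grp \<Longrightarrow> alpha x = g0 \<otimes>\<^bsub>S_grp\<^esub> x \<otimes>\<^bsub>S_grp\<^esub> inv\<^bsub>S_grp\<^esub> g0"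
    by blast
  have key: "alpha x \<otimes>\<^bsub>S_grp\<^esub> g0 = g0 \<otimes>\<^bsub>S_grp\<^esub> x" if "x \<in> carrier S_grp" for x
    using H[OF that] g0 that by (simp add: G.m_assoc)
  obtain a b c k where g0e: "g0 = ((a,b,c),k)" by (cases g0) auto
  have abc: "0 \<le> a" "a \<le> 3" "0 \<le> b" "b \<le> 3" "0 \<le> c" "c \<le> 3" and k: "k \<in> d8c"
    using g0 by (auto simp: g0e carrier_S vc_def)
  have inc: "v1 \<in> carrier S_grp" "v2 \<in> carrier S_grp" "v3 \<in> carrier S_grp"
     "s_el \<in> carrier S_grp" "t_el \<in> carrier S_grp"
    by (auto simp: carrier_S vc_def d8c_def v1_def v2_def v3_def s_el_def t_el_def)
  have E: "fst (alpha x \<otimes>\<^bsub>S_grp\<^esub> g0) = fst (g0 \<otimes>\<^bsub>S_grp\<^esub> x)" if "x \<in> carrier S_grp" for x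
    using key[OF that] by simp
  note E1 = E[OF inc(1)] and E2 = E[OF inc(2)] and E3 = E[OF inc(3)] and Es = E[OF inc(4)] and Et = E[OF inc(5)]
  have k0: "k = (0,0)"
    using d8c_cases[OF k] E1 E2 E3
    by (auto simp: g0e mult_S alpha_def cc_def v1_def v2_def v3_def d8_act_conc act_s_def act_t_def
        vadd_def vmod_def m4s)
  show False
    using int4[OF abc(1,2)] int4[OF abc(5,6)] Es Et
    by (auto simp: g0e k0 mult_S alpha_def cc_def s_el_def t_el_def d8_act_conc act_s_def act_t_def
        vadd_def vmod_def)
qed


lemma Zc: "carrier Z2_4 = {0..<2} \<times> {0..<2} \<times> {0..<2} \<times> {0..<2}"
  by (simp add: Z2_4_def carrier_integer_mod_group)

lemma Zm: "(a,b,c,d) \<otimes>\<^bsub>Z2_4\<^esub> (a2,b2,c2,d2) = ((a + a2) mod 2, (b + b2) mod 2, (c + c2) mod 2, (d + d2) mod 2)"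
  by (simp add: Z2_4_def)

lemma Z_group: "group Z2_4"
  unfolding Z2_4_def by (intro DirProd_group group_integer_mod_group)

lemma z_cases: "z \<in> carrier Z2_4 \<Longrightarrow> \<exists>a b c d. z = (a,b,c,d) \<and> (a = 0 \<or> a = 1) \<and> (b = 0 \<or> b = 1) \<and> (c = 0 \<or> c = 1) \<and> (d = 0 \<or> d = 1)"
  by (cases z) (auto simp: Zc)

definition psiA :: "int \<times> int \<times> int \<times> int \<Rightarrow> vec4 \<times> d8" where
  "psiA z = (case z of (a,b,c,d) \<Rightarrow> (vmod (2 * b, 2 * a, 2 * a + 2 * b), ((2 * c + d) mod 4, d)))"

definition phiA :: "vec4 \<times> d8 \<Rightarrow> int \<times> int \<times> int \<times> int" where
  "phiA x = (case x of ((p,q,r),(k,e)) \<Rightarrow> (q div 2, p div 2, k div 2, e))"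

definition A_set where "A_set = psiA ` carrier Z2_4"

lemma two_mod: "2 * (x mod 2) = (2 * x) mod (4::int)"
  using mod_mult_mult1[of 2 x 2] by simp

lemma psiA_carrier: "z \<in> carrier Z2_4 \<Longrightarrow> psiA z \<in> carrier S_grp"
  by (cases z) (auto simp: Zc psiA_def carrier_S vmod_vc d8c_def)

lemma phiA_psiA: "z \<in> carrier Z2_4 \<Longrightarrow> phiA (psiA z) = z"
  using z_cases[of z] by (auto simp: psiA_def phiA_def vmod_def)

lemma psiA_inj: "inj_on psiA (carrier Z2_4)"
  by (metis inj_on_inverseI phiA_psiA)

lemma psiA_hom_eq: assumes "x \<in> carrier Z2_4" "y \<in> carrier Z2_4"
  shows "psiA (x \<otimes>\<^bsub>Z2_4\<^esub> y) = psiA x \<otimes>\<^bsub>S_grp\<^esub> psiA y"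
proof -
  obtain a b c d where x: "x = (a,b,c,d)" by (cases x) auto
  obtain a2 b2 c2 d2 where y: "y = (a2,b2,c2,d2)" by (cases y) auto
  have r: "c = 0 \<or> c = 1" "d = 0 \<or> d = 1" "c2 = 0 \<or> c2 = 1" "d2 = 0 \<or> d2 = 1"
    using assms by (auto simp: x y Zc)
  show ?thesis using r
    apply (elim disjE)
    apply (simp_all add: x y Zm psiA_def mult_S d8_act_vmod Lg_def numeral_eq_Suc ls_def lt_def d8_mult_def)
    apply (simp_all add: vmod_def vadd_def two_mod m4s algebra_simps)
    done
qed


lemma Z_cases16: "z \<in> carrier Z2_4 \<Longrightarrow> z \<in> {(0,0,0,0),(0,0,0,1),(0,0,1,0),(0,0,1,1),(0,1,0,0),(0,1,0,1),(0,1,1,0),(0,1,1,1),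
  (1,0,0,0),(1,0,0,1),(1,0,1,0),(1,0,1,1),(1,1,0,0),(1,1,0,1),(1,1,1,0),(1,1,1,1)}"
  using z_cases[of z] by auto

lemma psiA_0: "psiA (0,0,0,0) = \<one>\<^bsub>S_grp\<^esub>"
  by (simp add: psiA_def one_S vmod_def)

lemma Z_sq: "z \<in> carrier Z2_4 \<Longrightarrow> z \<otimes>\<^bsub>Z2_4\<^esub> z = (0,0,0,0)"
  using z_cases[of z] by (auto simp: Zm)

lemma A_subgroup: "subgroup A_set S_grp"
proof -
  interpret G: group S_grp by (rule group_S)
  interpret Z: group Z2_4 by (rule Z_group)
  show ?thesis
  proof (rule G.subgroupI)
    show "A_set \<subseteq> carrier S_grp" using psiA_carrier by (auto simp: A_set_def)
    show "A_set \<noteq> {}" using Z.one_closed by (auto simp: A_set_def)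
  next
    fix x assume "x \<in> A_set"
    then obtain z where z: "z \<in> carrier Z2_4" "x = psiA z" by (auto simp: A_set_def)
    have "psiA z \<otimes>\<^bsub>S_grp\<^esub> psiA z = \<one>\<^bsub>S_grp\<^esub>"
      using psiA_hom_eq[OF z(1) z(1), symmetric] Z_sq[OF z(1)] psiA_0 by simp
    then have "inv\<^bsub>S_grp\<^esub> (psiA z) = psiA z"
      using G.inv_equality psiA_carrier[OF z(1)] by blast
    then show "inv\<^bsub>S_grp\<^esub> x \<in> A_set" using z by (auto simp: A_set_def)
  next
    fix x y assume "x \<in> A_set" "y \<in> A_set"
    then obtain z w where z: "z \<in> carrier Z2_4" "x = psiA z" and w: "w \<in> carrier Z2_4" "y = psiA w"
      by (auto simp: A_set_def)
    then show "x \<otimes>\<^bsub>S_grp\<^esub> y \<in> A_set"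
      using psiA_hom_eq[OF z(1) w(1), symmetric] Z.m_closed[OF z(1) w(1)] by (auto simp: A_set_def)
  qed
qed

definition GA :: "(int \<times> int \<times> int \<times> int) set" where
  "GA = {(0,1,0,0),(1,1,0,0),(0,0,1,0),(0,0,1,1)}"

lemma pow2: "x \<in> carrier S_grp \<Longrightarrow> x [^]\<^bsub>S_grp\<^esub> (2::nat) = x \<otimes>\<^bsub>S_grp\<^esub> x"
proof -
  interpret G: group S_grp by (rule group_S)
  assume "x \<in> carrier S_grp" then show ?thesis by (simp add: numeral_2_eq_2)
qed

lemma el_carrier: "v1 \<in> carrier S_grp" "v2 \<in> carrier S_grp" "v3 \<in> carrier S_grp"
     "s_el \<in> carrier S_grp" "t_el \<in> carrier S_grp"
  by (auto simp: carrier_S vc_def d8c_def v1_def v2_def v3_def s_el_def t_el_def)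

lemma gensA_eq: "{ (v1 \<otimes>\<^bsub>S_grp\<^esub> v3) [^]\<^bsub>S_grp\<^esub> (2::nat),
       (v1 \<otimes>\<^bsub>S_grp\<^esub> v2) [^]\<^bsub>S_grp\<^esub> (2::nat),
       s_el [^]\<^bsub>S_grp\<^esub> (2::nat),
       t_el \<otimes>\<^bsub>S_grp\<^esub> s_el } = psiA ` GA"
proof -
  interpret G: group S_grp by (rule group_S)
  have p: "v1 \<otimes>\<^bsub>S_grp\<^esub> v3 \<in> carrier S_grp" "v1 \<otimes>\<^bsub>S_grp\<^esub> v2 \<in> carrier S_grp"
    using el_carrier by auto
  show ?thesis
    apply (simp only: pow2[OF p(1)] pow2[OF p(2)] pow2[OF el_carrier(4)])
    by (simp add: GA_def psiA_def mult_S v1_def v2_def v3_def s_el_def t_el_def d8_act_conc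
        act_s_def act_t_def vadd_def vmod_def d8_mult_def)
qed

lemma gensC_eq: "{ (v1 \<otimes>\<^bsub>S_grp\<^esub> v3) [^]\<^bsub>S_grp\<^esub> (2::nat),
       (v1 \<otimes>\<^bsub>S_grp\<^esub> v2) [^]\<^bsub>S_grp\<^esub> (2::nat),
       s_el [^]\<^bsub>S_grp\<^esub> (2::nat),
       v1 \<otimes>\<^bsub>S_grp\<^esub> v3 \<otimes>\<^bsub>S_grp\<^esub> t_el \<otimes>\<^bsub>S_grp\<^esub> s_el } = alpha ` psiA ` GA"
proof -
  interpret G: group S_grp by (rule group_S)
  have p: "v1 \<otimes>\<^bsub>S_grp\<^esub> v3 \<in> carrier S_grp" "v1 \<otimes>\<^bsub>S_grp\<^esub> v2 \<in> carrier S_grp"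
    using el_carrier by auto
  show ?thesis
    apply (simp only: pow2[OF p(1)] pow2[OF p(2)] pow2[OF el_carrier(4)])
    by (simp add: GA_def psiA_def alpha_def cc_def mult_S v1_def v2_def v3_def s_el_def t_el_def d8_act_conc
        act_s_def act_t_def vadd_def vmod_def d8_mult_def)
qed

lemma GA_carrier: "GA \<subseteq> carrier Z2_4" by (simp add: GA_def Zc)

lemma A_in_gen: assumes z: "z \<in> carrier Z2_4" shows "psiA z \<in> generate S_grp (psiA ` GA)"
proof -
  interpret Z: group Z2_4 by (rule Z_group)
  obtain a b c d where ze: "z = (a,b,c,d)" and r: "a = 0 \<or> a = 1" "b = 0 \<or> b = 1" "c = 0 \<or> c = 1" "d = 0 \<or> d = 1"
    using z_cases[OF z] by blast
  define p1 :: "int \<times> int \<times> int \<times> int" where "p1 = (if a = 1 then (1,1,0,0) else (0,0,0,0))"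
  define p2 :: "int \<times> int \<times> int \<times> int" where "p2 = (if (a + b) mod 2 = 1 then (0,1,0,0) else (0,0,0,0))"
  define p3 :: "int \<times> int \<times> int \<times> int" where "p3 = (if (c + d) mod 2 = 1 then (0,0,1,0) else (0,0,0,0))"
  define p4 :: "int \<times> int \<times> int \<times> int" where "p4 = (if d = 1 then (0,0,1,1) else (0,0,0,0))"
  have pc: "p1 \<in> carrier Z2_4" "p2 \<in> carrier Z2_4" "p3 \<in> carrier Z2_4" "p4 \<in> carrier Z2_4"
    by (auto simp: p1_def p2_def p3_def p4_def Zc)
  have pg: "psiA p1 \<in> generate S_grp (psiA ` GA)" "psiA p2 \<in> generate S_grp (psiA ` GA)"
     "psiA p3 \<in> generate S_grp (psiA ` GA)" "psiA p4 \<in> generate S_grp (psiA ` GA)"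
    by (auto simp: p1_def p2_def p3_def p4_def psiA_0 GA_def intro: generate.one generate.incl)
  have zz: "z = p1 \<otimes>\<^bsub>Z2_4\<^esub> (p2 \<otimes>\<^bsub>Z2_4\<^esub> (p3 \<otimes>\<^bsub>Z2_4\<^esub> p4))"
    using r by (auto simp: ze p1_def p2_def p3_def p4_def Zm)
  have "psiA z = psiA p1 \<otimes>\<^bsub>S_grp\<^esub> (psiA p2 \<otimes>\<^bsub>S_grp\<^esub> (psiA p3 \<otimes>\<^bsub>S_grp\<^esub> psiA p4))"
    unfolding zz using pc by (simp add: psiA_hom_eq)
  then show ?thesis using pg by (simp add: generate.eng)
qed

lemma two_A_eq: "two_A = A_set"
proof -
  interpret G: group S_grp by (rule group_S)
  show ?thesis
  proof
    show "two_A \<subseteq> A_set"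
      unfolding two_A_def gensA_eq
      by (rule G.generate_subgroup_incl[OF _ A_subgroup]) (use GA_carrier in \<open>auto simp: A_set_def\<close>)
    show "A_set \<subseteq> two_A"
      unfolding two_A_def gensA_eq A_set_def using A_in_gen by auto
  qed
qed

lemma alpha_group_hom: "group_hom S_grp S_grp alpha"
  by (intro group_hom.intro group_S group_hom_axioms.intro) (use alpha_iso in \<open>auto simp: iso_def\<close>)

lemma two_C_eq: "two_C = alpha ` A_set"
proof -
  have sub: "psiA ` GA \<subseteq> carrier S_grp" using GA_carrier psiA_carrier by auto
  have "two_C = generate S_grp (alpha ` psiA ` GA)" unfolding two_C_def gensC_eq ..
  also have "\<dots> = alpha ` generate S_grp (psiA ` GA)"
    by (rule group_hom.generate_img[OF alpha_group_hom sub])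
  also have "generate S_grp (psiA ` GA) = two_A" unfolding two_A_def gensA_eq ..
  finally show ?thesis using two_A_eq by simp
qed

lemma psiA_iso: "psiA \<in> iso Z2_4 (S_grp\<lparr>carrier := A_set\<rparr>)"
  unfolding iso_def hom_def
  using psiA_hom_eq psiA_inj
  by (auto simp: A_set_def bij_betw_def)

lemma alpha_inj: "inj_on alpha (carrier S_grp)"
  using alpha_bij bij_betw_imp_inj_on by blast

lemma psiC_iso: "(alpha \<circ> psiA) \<in> iso Z2_4 (S_grp\<lparr>carrier := alpha ` A_set\<rparr>)"
proof -
  interpret Z: group Z2_4 by (rule Z_group)
  have inj: "inj_on (alpha \<circ> psiA) (carrier Z2_4)"
    by (rule comp_inj_on[OF psiA_inj inj_on_subset[OF alpha_inj]]) (use psiA_carrier in auto)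
  have h: "alpha (psiA (x \<otimes>\<^bsub>Z2_4\<^esub> y)) = alpha (psiA x) \<otimes>\<^bsub>S_grp\<^esub> alpha (psiA y)"
    if "x \<in> carrier Z2_4" "y \<in> carrier Z2_4" for x y
    using that by (simp add: psiA_hom_eq alpha_hom_eq psiA_carrier)
  show ?thesis
    unfolding iso_def hom_def
    using h inj by (auto simp: A_set_def bij_betw_def image_comp)
qed

definition sw :: "int \<times> int \<times> int \<times> int \<Rightarrow> int \<times> int \<times> int \<times> int" where
  "sw z = (case z of (a,b,c,d) \<Rightarrow> (a, (b + d) mod 2, c, d))"

lemma alpha2_psiA: "z \<in> carrier Z2_4 \<Longrightarrow> alpha (alpha (psiA z)) = psiA (sw z)"
  using z_cases[of z] by (auto simp: alpha_def cc_def psiA_def sw_def vadd_def vmod_def)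

lemma sw_carrier: "z \<in> carrier Z2_4 \<Longrightarrow> sw z \<in> carrier Z2_4"
  using z_cases[of z] by (auto simp: sw_def Zc)

lemma sw_sw: "z \<in> carrier Z2_4 \<Longrightarrow> sw (sw z) = z"
  using z_cases[of z] by (auto simp: sw_def)

lemma sw_image: "sw ` carrier Z2_4 = carrier Z2_4"
  using sw_carrier sw_sw by (metis (no_types, lifting) image_subset_iff subsetI subset_antisym image_eqI)

lemma alpha2_A: "alpha ` alpha ` A_set = A_set"
proof -
  have "alpha ` alpha ` A_set = (\<lambda>z. alpha (alpha (psiA z))) ` carrier Z2_4"
    by (simp add: A_set_def image_image)
  also have "\<dots> = (\<lambda>z. psiA (sw z)) ` carrier Z2_4"
    by (rule image_cong) (simp_all add: alpha2_psiA)
  also have "\<dots> = psiA ` sw ` carrier Z2_4" by (simp add: image_image)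
  also have "\<dots> = A_set" by (simp add: sw_image A_set_def)
  finally show ?thesis .
qed

theorem lemma2p5:
  shows "group S_grp
     \<and> (S_grp \<lparr>carrier := two_A\<rparr>) \<cong> Z2_4
     \<and> (S_grp \<lparr>carrier := two_C\<rparr>) \<cong> Z2_4
     \<and> (\<exists>\<alpha>. \<alpha> \<in> iso S_grp S_grp
            \<and> \<not> (\<exists>g \<in> carrier S_grp. \<forall>x \<in> carrier S_grp.
                    \<alpha> x = g \<otimes>\<^bsub>S_grp\<^esub> x \<otimes>\<^bsub>S_grp\<^esub> inv\<^bsub>S_grp\<^esub> g)
            \<and> \<alpha> ` two_A = two_C \<and> \<alpha> ` two_C = two_A)"
proof (intro conjI)
  show "group S_grp" by (rule group_S)
  show "(S_grp \<lparr>carrier := two_A\<rparr>) \<cong> Z2_4"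
    using group.iso_sym[OF Z_group is_isoI[OF psiA_iso]] two_A_eq by simp
  show "(S_grp \<lparr>carrier := two_C\<rparr>) \<cong> Z2_4"
    using group.iso_sym[OF Z_group is_isoI[OF psiC_iso]] two_C_eq by simp
  show "\<exists>\<alpha>. \<alpha> \<in> iso S_grp S_grp
            \<and> \<not> (\<exists>g \<in> carrier S_grp. \<forall>x \<in> carrier S_grp.
                    \<alpha> x = g \<otimes>\<^bsub>S_grp\<^esub> x \<otimes>\<^bsub>S_grp\<^esub> inv\<^bsub>S_grp\<^esub> g)
            \<and> \<alpha> ` two_A = two_C \<and> \<alpha> ` two_C = two_A"
  proof (intro exI[of _ alpha] conjI)
    show "alpha \<in> iso S_grp S_grp" by (rule alpha_iso)
    show "\<not> (\<exists>g \<in> carrier S_grp. \<forall>x \<in> carrier S_grp.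
                    alpha x = g \<otimes>\<^bsub>S_grp\<^esub> x \<otimes>\<^bsub>S_grp\<^esub> inv\<^bsub>S_grp\<^esub> g)"
      by (rule alpha_not_inner)
    show "alpha ` two_A = two_C" using two_A_eq two_C_eq by simp
    show "alpha ` two_C = two_A" using two_A_eq two_C_eq alpha2_A by simp
  qed
qed

end
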